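(* Let $(X,\mathcal T,P,\leq,\{\sigma_x:x\in X\})$ be a typed topological space. For any $x\in X$ and $p\in P$: (1) the type-$p$-connected component $p\vdash C(x)$ is type-$p$-connected; (2) $p\vdash CL_1(p\vdash C(x))=p\vdash C(x)$; and (3) $p\vdash tr(p\vdash C(x))=p\vdash C(x)$.
   Context: A typed topological space $(X,\mathcal T,P,\leq,\{\sigma_x:x\in X\})$ consists of a topological space $(X,\mathcal T)$, a partially ordered set $(P,\leq)$ of types, and for each $x\in X$ a partial function $\sigma_x:\{O\in\mathcal T:x\in O\}\to P$ such that for all $U,V$ in its domain, $\sigma_x(U)\leq\sigma_x(V)$ iff $U\subseteq V$. $U$ is a type-$p$ neighborhood of $x$, written $p\vdash U(x)$, if $U$ is in the domain of $\sigma_x$ and $\sigma_x(U)=p$. $x$ is a $p$-accumulation point of $A$ if every type-$p$ neighborhood of $x$ meets $A$. $p\vdash CL_1(A)=A\cup\{p\text{-accumulation points of }A\}$, $p\vdash CL_n(A)=p\vdash CL_1(p\vdash CL_{n-1}(A))$, $p\vdash tr(A)=\bigcup_{n\ge1}p\vdash CL_n(A)$. A set $A\subseteq X$ is type-$p$-connected if there do not exist two families of type-$p$ neighborhoods $\{p\vdash U(x_i):i\in I\}$ and $\{p\vdash U(x_j):j\in J\}$ with $I\neq\emptyset$, $J\neq\emptyset$, $A=\{x_i:i\in I\}\cup\{x_j:j\in J\}$ and $\left(\bigcup_{i\in I}U(x_i)\right)\cap\left(\bigcup_{j\in J}U(x_j)\right)=\emptyset$. The type-$p$-connected component $p\vdash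 C(x)$ is the union of all type-$p$-connected subsets of $X$ containing $x$. *)

theory Defs
  imports "HOL-Analysis.Analysis"
begin

text \<open>A typed topological space: a topology T on X = topspace T, a partially ordered
  type 'p of types, and for every point x a partial function sg x from the open
  neighbourhoods of x to 'p (encoded via option), order-embedding w.r.t. inclusion.\<close>

definition typed_top_space :: "'a topology \<Rightarrow> ('a \<Rightarrow> 'a set \<Rightarrow> ('p::order) option) \<Rightarrow> bool" where
  "typed_top_space T sg \<longleftrightarrow>
     (\<forall>x U. sg x U \<noteq> None \<longrightarrow> x \<in> topspace T \<and> openin T U \<and> x \<in> U) \<and>
     (\<forall>x U V p q. sg x U = Some p \<longrightarrow> sg x V = Some q \<longrightarrow> (p \<le> q \<longleftrightarrow> U \<subseteq> V))"

definition typed_nbhd :: "('a \<Rightarrow> 'a set \<Rightarrow> 'p option) \<Rightarrow> 'p \<Rightarrow> 'a set \<Rightarrow> 'a \<Rightarrow> bool" where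
  "typed_nbhd sg p U x \<longleftrightarrow> sg x U = Some p"

definition p_acc_point :: "'a topology \<Rightarrow> ('a \<Rightarrow> 'a set \<Rightarrow> 'p option) \<Rightarrow> 'p \<Rightarrow> 'a set \<Rightarrow> 'a \<Rightarrow> bool" where
  "p_acc_point T sg p A x \<longleftrightarrow> x \<in> topspace T \<and>
     (\<forall>U. typed_nbhd sg p U x \<longrightarrow> U \<inter> A \<noteq> {})"

definition CL1 :: "'a topology \<Rightarrow> ('a \<Rightarrow> 'a set \<Rightarrow> 'p option) \<Rightarrow> 'p \<Rightarrow> 'a set \<Rightarrow> 'a set" where
  "CL1 T sg p A = A \<union> {x. p_acc_point T sg p A x}"

text \<open>CLn T sg p n A = p |- CL_n(A) (meaningful for n \<ge> 1; CLn ... 1 = CL1)\<close>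
definition CLn :: "'a topology \<Rightarrow> ('a \<Rightarrow> 'a set \<Rightarrow> 'p option) \<Rightarrow> 'p \<Rightarrow> nat \<Rightarrow> 'a set \<Rightarrow> 'a set" where
  "CLn T sg p n A = (CL1 T sg p ^^ n) A"

definition typed_tr :: "'a topology \<Rightarrow> ('a \<Rightarrow> 'a set \<Rightarrow> 'p option) \<Rightarrow> 'p \<Rightarrow> 'a set \<Rightarrow> 'a set" where
  "typed_tr T sg p A = (\<Union>n\<in>{1..}. CLn T sg p n A)"

text \<open>Families of type-p neighbourhoods are encoded as sets of pairs (point, neighbourhood);
  repetitions of indices are irrelevant for the definition.\<close>
definition p_connected :: "('a \<Rightarrow> 'a set \<Rightarrow> 'p option) \<Rightarrow> 'p \<Rightarrow> 'a set \<Rightarrow> bool" where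
  "p_connected sg p A \<longleftrightarrow>
     \<not> (\<exists>F G :: ('a \<times> 'a set) set.
          F \<noteq> {} \<and> G \<noteq> {} \<and>
          (\<forall>(y,U)\<in>F. typed_nbhd sg p U y) \<and>
          (\<forall>(y,U)\<in>G. typed_nbhd sg p U y) \<and>
          A = fst ` F \<union> fst ` G \<and>
          (\<Union>(snd ` F)) \<inter> (\<Union>(snd ` G)) = {})"

definition p_component :: "'a topology \<Rightarrow> ('a \<Rightarrow> 'a set \<Rightarrow> 'p option) \<Rightarrow> 'p \<Rightarrow> 'a \<Rightarrow> 'a set" where
  "p_component T sg p x = \<Union>{A. A \<subseteq> topspace T \<and> x \<in> A \<and> p_connected sg p A}"

end

theory Submission
  imports Defs
begin

lemma fst_disj:
  assumes tts: "typed_top_space T sg"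
    and hF: "\<forall>(y,U)\<in>F. typed_nbhd sg p U y" and hG: "\<forall>(y,U)\<in>G. typed_nbhd sg p U y"
    and dj: "(\<Union>(snd ` F)) \<inter> (\<Union>(snd ` G)) = {}"
  shows "fst ` F \<inter> fst ` G = {}"
proof (rule ccontr)
  assume "fst ` F \<inter> fst ` G \<noteq> {}"
  then obtain y U V where a: "(y,U) \<in> F" "(y,V) \<in> G" by force
  have "y \<in> U" using hF a(1) tts unfolding typed_top_space_def typed_nbhd_def by fastforce
  moreover have "y \<in> V" using hG a(2) tts unfolding typed_top_space_def typed_nbhd_def by fastforce
  ultimately have "y \<in> (\<Union>(snd ` F)) \<inter> (\<Union>(snd ` G))" using a by force
  with dj show False by simp
qed

lemma split_side:
  assumes conn: "p_connected sg p A"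
    and hF: "\<forall>(y,U)\<in>F. typed_nbhd sg p U y" and hG: "\<forall>(y,U)\<in>G. typed_nbhd sg p U y"
    and dj: "(\<Union>(snd ` F)) \<inter> (\<Union>(snd ` G)) = {}"
    and sub: "A \<subseteq> fst ` F \<union> fst ` G"
  shows "A \<subseteq> fst ` F \<or> A \<subseteq> fst ` G"
proof (rule ccontr)
  assume nn: "\<not> (A \<subseteq> fst ` F \<or> A \<subseteq> fst ` G)"
  define F' where "F' = {q\<in>F. fst q \<in> A}"
  define G' where "G' = {q\<in>G. fst q \<in> A}"
  have "F' \<noteq> {}" using nn sub unfolding F'_def by force
  moreover have "G' \<noteq> {}" using nn sub unfolding G'_def by force
  moreover have "\<forall>(y,U)\<in>F'. typed_nbhd sg p U y" using hF unfolding F'_def by auto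
  moreover have "\<forall>(y,U)\<in>G'. typed_nbhd sg p U y" using hG unfolding G'_def by auto
  moreover have "A = fst ` F' \<union> fst ` G'" using sub unfolding F'_def G'_def by force
  moreover have "(\<Union>(snd ` F')) \<inter> (\<Union>(snd ` G')) = {}" using dj unfolding F'_def G'_def by blast
  ultimately show False using conn unfolding p_connected_def by blast
qed

lemma comp_sub:
  assumes "A \<subseteq> topspace T" "x \<in> A" "p_connected sg p A"
  shows "A \<subseteq> p_component T sg p x"
  unfolding p_component_def using assms by (intro Union_upper) simp

lemma comp_least:
  assumes "\<And>A. A \<subseteq> topspace T \<Longrightarrow> x \<in> A \<Longrightarrow> p_connected sg p A \<Longrightarrow> A \<subseteq> B"
  shows "p_component T sg p x \<subseteq> B"
  unfolding p_component_def using assms by (intro Union_least) simp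

lemma single_conn:
  assumes tts: "typed_top_space T sg"
  shows "p_connected sg p {y}"
  unfolding p_connected_def
proof (rule notI, elim exE conjE)
  fix F1 G1 :: "('a \<times> 'a set) set"
  assume a: "F1 \<noteq> {}" "G1 \<noteq> {}" "\<forall>(y,U)\<in>F1. typed_nbhd sg p U y"
    "\<forall>(y,U)\<in>G1. typed_nbhd sg p U y" "{y} = fst ` F1 \<union> fst ` G1"
    "(\<Union>(snd ` F1)) \<inter> (\<Union>(snd ` G1)) = {}"
  have d: "fst ` F1 \<inter> fst ` G1 = {}" using fst_disj[OF tts a(3,4,6)] .
  have s1: "fst ` F1 \<subseteq> {y}" "fst ` G1 \<subseteq> {y}" using a(5) by (metis Un_upper1, metis Un_upper2)
  have n1: "fst ` F1 \<noteq> {}" "fst ` G1 \<noteq> {}" using a(1,2) by simp_all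
  have "y \<in> fst ` F1" "y \<in> fst ` G1" using s1 n1 by (simp_all add: subset_singleton_iff)
  thus False using d by blast
qed

lemma comp_conn:
  assumes tts: "typed_top_space T sg" and x: "x \<in> topspace T"
  shows "p_connected sg p (p_component T sg p x)"
  unfolding p_connected_def
proof (rule notI, elim exE conjE)
  fix F G :: "('a \<times> 'a set) set"
  assume Fne: "F \<noteq> {}" and Gne: "G \<noteq> {}" and hF: "\<forall>(y,U)\<in>F. typed_nbhd sg p U y"
    and hG: "\<forall>(y,U)\<in>G. typed_nbhd sg p U y"
    and eq: "p_component T sg p x = fst ` F \<union> fst ` G"
    and dj: "(\<Union>(snd ` F)) \<inter> (\<Union>(snd ` G)) = {}"
  have fd: "fst ` F \<inter> fst ` G = {}" using fst_disj[OF tts hF hG dj] .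
  have side: "A \<subseteq> fst ` F \<or> A \<subseteq> fst ` G"
    if "A \<subseteq> topspace T" "x \<in> A" "p_connected sg p A" for A
  proof -
    have "A \<subseteq> fst ` F \<union> fst ` G" using comp_sub[OF that] eq by simp
    thus ?thesis using split_side[OF that(3) hF hG dj] by simp
  qed
  have "x \<in> p_component T sg p x" using comp_sub[OF _ _ single_conn[OF tts]] x by simp
  hence xin: "x \<in> fst ` F \<or> x \<in> fst ` G" using eq by simp
  show False
  proof (cases "x \<in> fst ` F")
    case True
    have "p_component T sg p x \<subseteq> fst ` F"
    proof (rule comp_least)
      fix A assume h: "A \<subseteq> topspace T" "x \<in> A" "p_connected sg p A"
      show "A \<subseteq> fst ` F"
      proof (rule ccontr)
        assume "\<not> A \<subseteq> fst ` F"
        hence "A \<subseteq> fst ` G" using side[OF h] by simp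
        thus False using h(2) True fd by blast
      qed
    qed
    hence "fst ` G \<subseteq> fst ` F" using eq by simp
    then show False using fd Gne by blast
  next
    case False
    hence xG: "x \<in> fst ` G" using xin by simp
    have "p_component T sg p x \<subseteq> fst ` G"
    proof (rule comp_least)
      fix A assume h: "A \<subseteq> topspace T" "x \<in> A" "p_connected sg p A"
      show "A \<subseteq> fst ` G"
      proof (rule ccontr)
        assume "\<not> A \<subseteq> fst ` G"
        hence "A \<subseteq> fst ` F" using side[OF h] by simp
        thus False using h(2) xG fd by blast
      qed
    qed
    hence "fst ` F \<subseteq> fst ` G" using eq by simp
    then show False using fd Fne by blast
  qed
qed

lemma acc_conn:
  assumes tts: "typed_top_space T sg" and conn: "p_connected sg p A"
    and acc: "p_acc_point T sg p A y"
  shows "p_connected sg p (insert y A)"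
  unfolding p_connected_def
proof (rule notI, elim exE conjE)
  fix F G :: "('a \<times> 'a set) set"
  assume Fne: "F \<noteq> {}" and Gne: "G \<noteq> {}" and hF: "\<forall>(y,U)\<in>F. typed_nbhd sg p U y"
    and hG: "\<forall>(y,U)\<in>G. typed_nbhd sg p U y"
    and eq: "insert y A = fst ` F \<union> fst ` G"
    and dj: "(\<Union>(snd ` F)) \<inter> (\<Union>(snd ` G)) = {}"
  have fd: "fst ` F \<inter> fst ` G = {}" using fst_disj[OF tts hF hG dj] .
  have fd2: "fst ` G \<inter> fst ` F = {}" using fd by blast
  have dj2: "(\<Union>(snd ` G)) \<inter> (\<Union>(snd ` F)) = {}" using dj by blast
  have gen: "False" if Fne: "F \<noteq> {}" and Gne: "G \<noteq> {}" and hF: "\<forall>(y,U)\<in>F. typed_nbhd sg p U y"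
    and hG: "\<forall>(y,U)\<in>G. typed_nbhd sg p U y"
    and eq: "insert y A = fst ` F \<union> fst ` G"
    and dj: "(\<Union>(snd ` F)) \<inter> (\<Union>(snd ` G)) = {}"
    and fd: "fst ` F \<inter> fst ` G = {}" and yF: "y \<in> fst ` F" for F G
  proof -
    obtain U where yU: "(y,U) \<in> F" using yF by force
    hence "typed_nbhd sg p U y" using hF by blast
    hence "U \<inter> A \<noteq> {}" using acc unfolding p_acc_point_def by blast
    then obtain z where z: "z \<in> U" "z \<in> A" by blast
    have "A \<subseteq> fst ` F \<or> A \<subseteq> fst ` G" using split_side[OF conn hF hG dj] eq by blast
    thus False
    proof
      assume "A \<subseteq> fst ` F"
      thus False using eq fd Gne yF by blast
    next
      assume "A \<subseteq> fst ` G"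
      then obtain V where zV: "(z,V) \<in> G" using z by force
      hence "z \<in> V" using hG tts unfolding typed_top_space_def typed_nbhd_def by fastforce
      hence "z \<in> (\<Union>(snd ` F)) \<inter> (\<Union>(snd ` G))" using z yU zV by force
      thus False using dj by simp
    qed
  qed
  have "y \<in> fst ` F \<or> y \<in> fst ` G" using eq by blast
  thus False
  proof
    assume "y \<in> fst ` F" thus False using gen[OF Fne Gne hF hG eq dj fd] by blast
  next
    assume "y \<in> fst ` G" thus False using gen[OF Gne Fne hG hF _ dj2 fd2] eq by blast
  qed
qed

theorem theorem2p15:
  fixes T :: "'a topology" and sg :: "'a \<Rightarrow> 'a set \<Rightarrow> ('p::order) option"
    and x :: 'a and p :: 'p
  assumes "typed_top_space T sg" and "x \<in> topspace T"
  shows "p_connected sg p (p_component T sg p x) \<and>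
         CL1 T sg p (p_component T sg p x) = p_component T sg p x \<and>
         typed_tr T sg p (p_component T sg p x) = p_component T sg p x"
proof -
  let ?C = "p_component T sg p x"
  have c1: "p_connected sg p ?C" using comp_conn[OF assms] .
  have Csub: "?C \<subseteq> topspace T" unfolding p_component_def by blast
  have xC: "x \<in> ?C" using comp_sub[OF _ _ single_conn[OF assms(1)]] assms(2) by simp
  have c2: "CL1 T sg p ?C = ?C"
  proof -
    have "y \<in> ?C" if "p_acc_point T sg p ?C y" for y
    proof -
      have h1: "p_connected sg p (insert y ?C)" using acc_conn[OF assms(1) c1 that] .
      have h2: "insert y ?C \<subseteq> topspace T" using Csub that unfolding p_acc_point_def by blast
      have h3: "x \<in> insert y ?C" using xC by blast
      have "insert y ?C \<subseteq> ?C" using comp_sub[OF h2 h3 h1] .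
      thus ?thesis by blast
    qed
    thus ?thesis unfolding CL1_def by blast
  qed
  have "CLn T sg p n ?C = ?C" for n
    unfolding CLn_def by (induction n) (simp_all add: c2)
  hence c3: "typed_tr T sg p ?C = ?C" unfolding typed_tr_def by auto
  show ?thesis using c1 c2 c3 by blast
qed

end
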